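(* Let $0<q<1$. For complex numbers $a,b,c,d,\alpha,\beta,\gamma,\delta$ with $\mathrm{Re}(a+b+c+d+1+\alpha-\beta-\gamma-\delta)>0$, and such that every $q^2$-gamma value occurring below is evaluated at a point that is not a non-positive integer, put $A=2(a+b+c+d+1+\alpha-\beta-\gamma-\delta)$. Then \[ \sum_{n=0}^{\infty}\frac{(1-q^{4n+2a+2\alpha})(\alpha|q^{2})_{a+n}(\beta|q^{2})_{n-b}(\gamma|q^{2})_{n-c}(\delta|q^{2})_{n-d}}{(1-q^{2})[n]_{q^{2}}!\,(1+\alpha-\beta|q^{2})_{a+b+n}(1+\alpha-\gamma|q^{2})_{a+c+n}(1+\alpha-\delta|q^{2})_{a+d+n}}\,q^{An} \] \[ =\frac{\Gamma_{q^{2}}(1+\alpha-\beta)\Gamma_{q^{2}}(1+\alpha-\gamma)\Gamma_{q^{2}}(1+\alpha-\delta)\Gamma_{q^{2}}(2+\alpha-\beta-\gamma-\delta)}{\Gamma_{q^{2}}(\alpha)\Gamma_{q^{2}}(1+\alpha-\beta-\gamma)\Gamma_{q^{2}}(1+\alpha-\beta-\delta)\Gamma_{q^{2}}(1+\alpha-\gamma-\delta)} \times\frac{(\beta|q^{2})_{-b}(\gamma|q^{2})_{-c}(\delta|q^{2})_{-d}(2+\alpha-\beta-\gamma-\delta|q^{2})_{a+b+c+d-1}}{(1+\alpha-\beta-\gamma|q^{2})_{a+b+c}(1+\alpha-\beta-\delta|q^{2})_{a+b+d}(1+\alpha-\gamma-\delta|q^{2})_{a+c+d}}. \]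
   Context: Let $0<q<1$ and write $q^{x}=e^{x\log q}$ for complex $x$. Set $(z;q)_\infty=\prod_{k\ge0}(1-zq^k)$. The $q^2$-gamma function is $\Gamma_{q^2}(x)=\frac{(q^2;q^2)_\infty}{(q^{2x};q^2)_\infty}(1-q^2)^{1-x}$. For complex $x,\alpha$, the general $q$-shifted factorial is $(x|q^2)_\alpha=\Gamma_{q^2}(x+\alpha)/\Gamma_{q^2}(x)$. The $q$-integer is $[z]_{q^2}=\frac{1-q^{2z}}{1-q^2}$, and $[0]_{q^2}!=1$, $[n]_{q^2}!=\prod_{k=1}^n[k]_{q^2}$. *)

theory Defs
  imports "HOL-Analysis.Analysis"
begin

definition qpow :: "real \<Rightarrow> complex \<Rightarrow> complex" where
  "qpow p x = exp (x * complex_of_real (ln p))"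

definition qpoch_inf :: "complex \<Rightarrow> real \<Rightarrow> complex" where
  "qpoch_inf z p = (\<Prod>k. 1 - z * complex_of_real (p ^ k))"

definition qgamma :: "real \<Rightarrow> complex \<Rightarrow> complex" where
  "qgamma p x = qpoch_inf (complex_of_real p) p / qpoch_inf (qpow p x) p * qpow (1 - p) (1 - x)"

definition qshift :: "real \<Rightarrow> complex \<Rightarrow> complex \<Rightarrow> complex" where
  "qshift p x \<alpha> = qgamma p (x + \<alpha>) / qgamma p x"

definition qint :: "real \<Rightarrow> complex \<Rightarrow> complex" where
  "qint p z = (1 - qpow p z) / (1 - complex_of_real p)"

definition qfact :: "real \<Rightarrow> nat \<Rightarrow> complex" where
  "qfact p n = (\<Prod>k=1..n. qint p (of_nat k))"

text \<open>x is a pole of Gamma_p: some factor 1 - p^x p^k of (p^x;p)_inf vanishes.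
  For real x this means exactly that x is a non-positive integer.\<close>
definition qgamma_pole :: "real \<Rightarrow> complex \<Rightarrow> bool" where
  "qgamma_pole p x \<longleftrightarrow> (\<exists>k::nat. qpow p (x + of_nat k) = 1)"

end

theory Submission
  imports Defs
begin


definition qp :: "complex \<Rightarrow> real \<Rightarrow> nat \<Rightarrow> complex" where
  "qp a p n = (\<Prod>k<n. 1 - a * complex_of_real (p ^ k))"

lemma norm_ofreal_pow [simp]: "0 \<le> p \<Longrightarrow> norm (complex_of_real p ^ k) = p ^ k"
  by (simp add: norm_power)

lemma qp_0[simp]: "qp a p 0 = 1" by (simp add: qp_def)

lemma qp_Suc: "qp a p (Suc n) = qp a p n * (1 - a * of_real (p^n))"
  by (simp add: qp_def)

lemma qp_add: "qp a p (m + n) = qp a p m * qp (a * of_real (p^m)) p n"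
  by (induction n) (simp_all add: qp_Suc power_add mult_ac)

lemma qp_Suc': "qp a p (Suc n) = (1 - a) * qp (a * of_real p) p n"
  using qp_add[of a p 1 n] by (simp add: qp_def)

lemma qpoch_conv:
  assumes "0 < p" "p < 1"
  shows "convergent_prod (\<lambda>k. 1 - a * complex_of_real (p^k))"
proof -
  have "summable (\<lambda>k. norm a * p^k)"
    using assms by (intro summable_mult summable_geometric) auto
  moreover have "norm (1 - a * complex_of_real (p^k) - 1) = norm a * p^k" for k
    using assms by (simp add: norm_mult)
  ultimately show ?thesis
    by (intro abs_convergent_prod_imp_convergent_prod summable_imp_abs_convergent_prod) simp
qed

lemma qp_tendsto:
  assumes "0 < p" "p < 1"
  shows "(\<lambda>n. qp a p n) \<longlonglongrightarrow> qpoch_inf a p"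
proof -
  have "(\<lambda>n. \<Prod>i\<le>n. 1 - a * complex_of_real (p^i)) \<longlonglongrightarrow> qpoch_inf a p"
    unfolding qpoch_inf_def by (rule convergent_prod_LIMSEQ[OF qpoch_conv[OF assms]])
  hence "(\<lambda>n. qp a p (Suc n)) \<longlonglongrightarrow> qpoch_inf a p"
    by (simp add: qp_def lessThan_Suc_atMost)
  thus ?thesis by (rule filterlim_sequentially_Suc[THEN iffD1])
qed

lemma qpoch_inf_nz:
  assumes "0 < p" "p < 1" "\<And>k. a * complex_of_real (p^k) \<noteq> 1"
  shows "qpoch_inf a p \<noteq> 0"
  unfolding qpoch_inf_def
  by (rule prodinf_nonzero[OF qpoch_conv[OF assms(1,2)]]) (use assms(3) in auto)

lemma qpoch_inf_split:
  assumes "0 < p" "p < 1"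
  shows "qpoch_inf a p = qp a p n * qpoch_inf (a * of_real (p^n)) p"
proof -
  have 1: "(\<lambda>m. qp a p (m + n)) \<longlonglongrightarrow> qpoch_inf a p"
    by (rule LIMSEQ_ignore_initial_segment[OF qp_tendsto[OF assms]])
  have 2: "(\<lambda>m. qp a p (m + n)) \<longlonglongrightarrow> qp a p n * qpoch_inf (a * of_real (p^n)) p"
    unfolding add.commute[of _ n] qp_add
    by (intro tendsto_mult tendsto_const qp_tendsto assms)
  show ?thesis using LIMSEQ_unique[OF 1 2] .
qed

lemma geom_sum_le:
  fixes p :: real
  assumes "0 \<le> p" "p < 1"
  shows "(\<Sum>k<n. p^k) \<le> 1 / (1 - p)"
proof -
  have "(\<Sum>k<n. p^k) \<le> (\<Sum>k. p^k)"
    using assms by (intro sum_le_suminf summable_geometric) auto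
  also have "\<dots> = 1 / (1 - p)" using assms by (simp add: suminf_geometric)
  finally show ?thesis .
qed

lemma qp_upper:
  assumes "0 \<le> p" "p < 1"
  shows "norm (qp a p n) \<le> exp (norm a / (1 - p))"
proof -
  have "norm (qp a p n) = (\<Prod>k<n. norm (1 - a * complex_of_real (p^k)))"
    by (simp add: qp_def prod_norm)
  also have "\<dots> \<le> (\<Prod>k<n. exp (norm a * p^k))"
  proof (intro prod_mono conjI)
    fix k
    have "norm (1 - a * complex_of_real (p^k)) \<le> 1 + norm a * p^k"
      using norm_triangle_ineq4[of 1 "a * complex_of_real (p^k)"] assms
      by (simp add: norm_mult)
    also have "\<dots> \<le> exp (norm a * p^k)" by (rule exp_ge_add_one_self)
    finally show "norm (1 - a * complex_of_real (p^k)) \<le> exp (norm a * p^k)" .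
  qed simp
  also have "\<dots> = exp (norm a * (\<Sum>k<n. p^k))"
    by (simp add: exp_sum sum_distrib_left)
  also have "\<dots> \<le> exp (norm a / (1 - p))"
    using geom_sum_le[OF assms, of n] by (simp add: mult_left_mono divide_inverse)
  finally show ?thesis .
qed

lemma one_minus_ge_exp:
  fixes y :: real assumes "0 \<le> y" "y \<le> 1/2"
  shows "exp (-2*y) \<le> 1 - y"
proof -
  have "1 + 2*y \<le> exp (2*y)" by (rule exp_ge_add_one_self)
  hence "exp (-2*y) \<le> 1 / (1 + 2*y)"
    using assms by (simp add: exp_minus field_simps)
  also have "\<dots> \<le> 1 - y"
  proof -
    have "0 \<le> y*(1-2*y)" using assms by (intro mult_nonneg_nonneg) auto
    hence "1 \<le> (1-y)*(1+2*y)" by (simp add: algebra_simps)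
    thus ?thesis using assms by (simp add: divide_le_eq mult.commute)
  qed
  finally show ?thesis .
qed

lemma qp_lower:
  assumes "0 \<le> p" "p < 1" "norm a \<le> 1/2"
  shows "exp (-2 * norm a / (1 - p)) \<le> norm (qp a p n)"
proof -
  have "norm a * (\<Sum>k<n. p^k) \<le> norm a * (1/(1-p))"
    by (rule mult_left_mono[OF geom_sum_le[OF assms(1,2)]]) simp
  moreover have "-2 * norm a / (1-p) = -2 * (norm a * (1/(1-p)))" by simp
  ultimately have "-2 * norm a / (1 - p) \<le> -2 * (norm a * (\<Sum>k<n. p^k))" by linarith
  hence "exp (-2 * norm a / (1 - p)) \<le> exp (-2 * (norm a * (\<Sum>k<n. p^k)))"
    by (simp only: exp_le_cancel_iff)
  also have "\<dots> = exp (\<Sum>k<n. -2 * (norm a * p^k))"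
    by (simp only: sum_distrib_left[symmetric])
  also have "\<dots> = (\<Prod>k<n. exp (-2 * (norm a * p^k)))"
    by (rule exp_sum) (rule finite_lessThan)
  also have "\<dots> \<le> (\<Prod>k<n. norm (1 - a * complex_of_real (p^k)))"
  proof (intro prod_mono conjI)
    fix k
    have pk: "p^k \<le> 1" "0 \<le> p^k" using assms by (auto intro: power_le_one)
    have "norm a * p^k \<le> 1/2" using assms pk mult_mono[of "norm a" "1/2" "p^k" 1] by simp
    hence "exp (-2 * (norm a * p^k)) \<le> 1 - norm a * p^k"
      using pk by (intro one_minus_ge_exp) auto
    also have "\<dots> \<le> norm (1 - a * complex_of_real (p^k))"
      using norm_triangle_ineq2[of 1 "a * complex_of_real (p^k)"] pk assms(1)
      by (simp add: norm_mult)
    finally show "exp (-2 * (norm a * p^k)) \<le> norm (1 - a * complex_of_real (p^k))" .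
  qed simp
  also have "\<dots> = norm (qp a p n)" by (simp add: qp_def prod_norm)
  finally show ?thesis .
qed



lemma qp_nz:
  assumes "\<And>k. a * complex_of_real (p^k) \<noteq> 1"
  shows "qp a p n \<noteq> 0"
proof -
  have "1 - a * complex_of_real (p^k) \<noteq> 0" for k using assms[of k] by auto
  thus ?thesis unfolding qp_def by (subst prod_zero_iff) auto
qed

lemma qp_lower_gen:
  assumes "0 < p" "p < 1" "\<And>k. a * complex_of_real (p^k) \<noteq> 1"
  shows "\<exists>c>0. \<forall>n. c \<le> norm (qp a p n)"
proof -
  have "(\<lambda>n. norm a * p^n) \<longlonglongrightarrow> 0"
    using assms by (intro tendsto_mult_right_zero LIMSEQ_power_zero) auto
  hence "eventually (\<lambda>n. norm a * p^n < 1/2) sequentially"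
    by (rule order_tendstoD(2)) simp
  then obtain K where K: "norm a * p^K < 1/2"
    by (auto simp: eventually_sequentially)
  define m where "m = Min ((\<lambda>n. norm (qp a p n)) ` {..K})"
  have fin: "finite ((\<lambda>n. norm (qp a p n)) ` {..K})" by simp
  have ne: "(\<lambda>n. norm (qp a p n)) ` {..K} \<noteq> {}" by simp
  have m_pos: "0 < m" unfolding m_def
    using qp_nz[OF assms(3)] by (subst Min_gr_iff[OF fin ne]) auto
  have m_le: "m \<le> norm (qp a p n)" if "n \<le> K" for n
    unfolding m_def using that by (intro Min_le fin) auto
  have e1: "exp (-1/(1-p)) \<le> 1" using assms by simp
  have e0: "0 < exp (-1/(1-p))" by simp
  have "m * exp (-1/(1-p)) \<le> norm (qp a p n)" for n
  proof (cases "n \<le> K")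
    case True
    have "m * exp (-1/(1-p)) \<le> m" using e1 m_pos by (simp add: mult_left_le)
    with m_le[OF True] show ?thesis by linarith
  next
    case False
    define j where "j = n - K"
    have n: "n = K + j" using False by (simp add: j_def)
    have na: "norm (a * complex_of_real (p^K)) = norm a * p^K"
      using assms by (simp add: norm_mult)
    have "exp (-2 * norm (a * complex_of_real (p^K)) / (1 - p)) \<le> norm (qp (a * complex_of_real (p^K)) p j)"
      using assms K na by (intro qp_lower) auto
    moreover have "exp (-1/(1-p)) \<le> exp (-2 * norm (a * complex_of_real (p^K)) / (1 - p))"
      using K na assms by (simp add: divide_le_cancel)
    ultimately have h: "exp (-1/(1-p)) \<le> norm (qp (a * complex_of_real (p^K)) p j)" by linarith
    have "m * exp (-1/(1-p)) \<le> norm (qp a p K) * norm (qp (a * complex_of_real (p^K)) p j)"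
      using m_le[of K] h m_pos e0 by (intro mult_mono) auto
    also have "\<dots> = norm (qp a p n)" unfolding n qp_add by (simp add: norm_mult)
    finally show ?thesis .
  qed
  thus ?thesis using m_pos e0 by (intro exI[of _ "m * exp (-1/(1-p))"]) auto
qed



lemma polyid:
  fixes A B C D P x :: complex
  assumes "B \<noteq> 0" "C \<noteq> 0" "D \<noteq> 0"
  shows "(1-A*x^2)*(1-A*P/(B*C*D))*((1-A*P/B*x)*(1-A*P/C*x)*(1-A*P/D*x))
     - (1-A*P*x^2)*(1-A*x)*x*((1-A*P/(B*C))*(1-A*P/(B*D))*(1-A*P/(C*D)))
   = -((1-A*x)*(1-B*x)*(1-C*x)*(1-D*x)*(A*P/(B*C*D)))*(1-A*(A*P/(B*C*D))*(P*x))
     + (1-x)*(1-A*(A*P/(B*C*D))*x)*((1-A*P/B*x)*(1-A*P/C*x)*(1-A*P/D*x))"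
  using assms by (simp add: field_simps) algebra



definition sv :: "real \<Rightarrow> complex \<Rightarrow> complex \<Rightarrow> complex \<Rightarrow> complex \<Rightarrow> nat \<Rightarrow> complex" where
  "sv p B C D A n = (qp A p n * qp B p n * qp C p n * qp D p n)
     / (qp (complex_of_real p) p n * qp (A * complex_of_real p / B) p n
        * qp (A * complex_of_real p / C) p n * qp (A * complex_of_real p / D) p n)
     * (A * complex_of_real p / (B * C * D)) ^ n"

definition tv :: "real \<Rightarrow> complex \<Rightarrow> complex \<Rightarrow> complex \<Rightarrow> complex \<Rightarrow> nat \<Rightarrow> complex" where
  "tv p B C D A n = (1 - A * complex_of_real p ^ (2*n)) * sv p B C D A n"

lemma sv_Suc:
  "sv p B C D A (Suc n) = sv p B C D A n *
     ((1 - A * complex_of_real p ^ n) * (1 - B * complex_of_real p ^ n) * (1 - C * complex_of_real p ^ n)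
      * (1 - D * complex_of_real p ^ n) * (A * complex_of_real p / (B * C * D))
     / ((1 - complex_of_real p * complex_of_real p ^ n) * ((1 - A * complex_of_real p / B * complex_of_real p ^ n)
        * (1 - A * complex_of_real p / C * complex_of_real p ^ n) * (1 - A * complex_of_real p / D * complex_of_real p ^ n))))"
  unfolding sv_def qp_Suc by (simp add: divide_inverse inverse_mult_distrib mult_ac)

lemma alg_shift:
  fixes a1 a2 b c d e f1 f2 g1 g2 h1 h2 w1 w2 A u kB kC kD yB yC yD x :: complex
  assumes "(1-A)*a2 = a1*u" "kB*f2 = f1*yB" "kC*g2 = g1*yC" "kD*h2 = h1*yD" "w2 = w1*x"
    "e \<noteq> 0" "f1 \<noteq> 0" "f2 \<noteq> 0" "g1 \<noteq> 0" "g2 \<noteq> 0" "h1 \<noteq> 0" "h2 \<noteq> 0"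
  shows "a2*b*c*d/(e*f2*g2*h2)*w2*(1-A)*(yB*yC*yD) = a1*b*c*d/(e*f1*g1*h1)*w1*u*(kB*kC*kD)*x"
proof -
  have "a2*b*c*d/(e*f2*g2*h2)*w2*(1-A)*(yB*yC*yD) = ((1-A)*a2)*b*c*d*w2*(f1*yB)*(g1*yC)*(h1*yD)/(e*f1*g1*h1*f2*g2*h2)"
    using assms(6-) by (simp add: field_simps)
  also have "\<dots> = (a1*u)*b*c*d*(w1*x)*(kB*f2)*(kC*g2)*(kD*h2)/(e*f1*g1*h1*f2*g2*h2)"
    by (simp only: assms(1-5))
  also have "\<dots> = a1*b*c*d/(e*f1*g1*h1)*w1*u*(kB*kC*kD)*x"
    using assms(6-) by (simp add: field_simps)
  finally show ?thesis .
qed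

lemma qp_shift_rel:
  "(1 - a) * qp (a * complex_of_real p) p n = qp a p n * (1 - a * complex_of_real p ^ n)"
  using qp_Suc[of a p n] qp_Suc'[of a p n] by simp

lemma sv_shift:
  assumes "0 < p" "p < 1"
    and hB: "\<And>k. A * complex_of_real p / B * complex_of_real (p^k) \<noteq> 1"
    and hC: "\<And>k. A * complex_of_real p / C * complex_of_real (p^k) \<noteq> 1"
    and hD: "\<And>k. A * complex_of_real p / D * complex_of_real (p^k) \<noteq> 1"
  shows "sv p B C D (A * complex_of_real p) n * (1 - A)
      * ((1 - A * complex_of_real p / B * complex_of_real p ^ n) * (1 - A * complex_of_real p / C * complex_of_real p ^ n)
        * (1 - A * complex_of_real p / D * complex_of_real p ^ n))
    = sv p B C D A n * (1 - A * complex_of_real p ^ n)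
      * ((1 - A * complex_of_real p / B) * (1 - A * complex_of_real p / C) * (1 - A * complex_of_real p / D))
      * complex_of_real p ^ n"
proof -
  let ?P = "complex_of_real p"
  have sh: "A * ?P / X * ?P * complex_of_real (p^k) \<noteq> 1"
    if h: "\<And>k. A * ?P / X * complex_of_real (p^k) \<noteq> 1" for X k
    using h[of "Suc k"] by (simp add: mult_ac)
  have e: "qp ?P p n \<noteq> 0"
  proof (rule qp_nz)
    fix k
    have "p ^ Suc k < 1" using assms(1,2) by (rule power_Suc_less_one)
    hence "complex_of_real (p ^ Suc k) \<noteq> 1" by (metis less_irrefl of_real_eq_1_iff)
    thus "?P * complex_of_real (p^k) \<noteq> 1" by simp
  qed
  have eqB: "A * ?P * ?P / B = A * ?P / B * ?P" for B by simp
  have zz: "A*?P*?P/(B*C*D) = A*?P/(B*C*D)*?P" by simp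
  show ?thesis
    unfolding sv_def
    apply (subst (1 2 3) eqB)
    apply (rule alg_shift)
    apply (rule qp_shift_rel)
    apply (rule qp_shift_rel)
    apply (rule qp_shift_rel)
    apply (rule qp_shift_rel)
    apply (simp only: zz power_mult_distrib)
    apply (rule e)
    apply (rule qp_nz, rule hB)
    apply (rule qp_nz, rule sh, rule hB)
    apply (rule qp_nz, rule hC)
    apply (rule qp_nz, rule sh, rule hC)
    apply (rule qp_nz, rule hD)
    apply (rule qp_nz, rule sh, rule hD)
    done
qed



definition gv :: "real \<Rightarrow> complex \<Rightarrow> complex \<Rightarrow> complex \<Rightarrow> complex \<Rightarrow> nat \<Rightarrow> complex" where
  "gv p B C D A m = - ((1-A*complex_of_real p/B)*(1-A*complex_of_real p/C)*(1-A*complex_of_real p/D))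
     * sv p B C D A m * (1 - complex_of_real p ^ m)
     * (1 - A*(A*complex_of_real p/(B*C*D))*complex_of_real p ^ m)"

lemma abstr:
  fixes a1 b1 zz Pi Q u x M r w e1 e2 S K :: complex
  assumes "Pi \<noteq> 0" "Q \<noteq> 0" "a1*zz*Pi - b1*u*x*M = -r*w + e1*e2*Pi"
  shows "a1*S*(K*zz) - b1*(S*u*K*x/Pi)*M = -K*(S*(r/(Q*Pi)))*Q*w - (-K*S*e1*e2)"
proof -
  have "a1*S*(K*zz) - b1*(S*u*K*x/Pi)*M = S*K/Pi*(a1*zz*Pi - b1*u*x*M)"
    using assms(1) by (simp add: field_simps)
  also have "\<dots> = S*K/Pi*(-r*w + e1*e2*Pi)" by (simp only: assms(3))
  also have "\<dots> = -K*(S*(r/(Q*Pi)))*Q*w - (-K*S*e1*e2)"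
    using assms(1,2) by (simp add: field_simps)
  finally show ?thesis .
qed

lemma tele:
  assumes p: "0 < p" "p < 1"
    and hB: "\<And>k. A * complex_of_real p / B * complex_of_real (p^k) \<noteq> 1"
    and hC: "\<And>k. A * complex_of_real p / C * complex_of_real (p^k) \<noteq> 1"
    and hD: "\<And>k. A * complex_of_real p / D * complex_of_real (p^k) \<noteq> 1"
    and nz: "B \<noteq> 0" "C \<noteq> 0" "D \<noteq> 0"
  shows "tv p B C D A n * (((1-A*complex_of_real p/B)*(1-A*complex_of_real p/C)*(1-A*complex_of_real p/D))
            * (1 - A*complex_of_real p/(B*C*D)))
       - tv p B C D (A*complex_of_real p) n * ((1-A)*((1-A*complex_of_real p/(B*C))
            * (1-A*complex_of_real p/(B*D))*(1-A*complex_of_real p/(C*D))))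
       = gv p B C D A (Suc n) - gv p B C D A n"
proof -
  define P where "P = complex_of_real p"
  define x where "x = P ^ n"
  define S where "S = sv p B C D A n"
  define T where "T = sv p B C D (A*P) n"
  define K where "K = (1-A*P/B)*(1-A*P/C)*(1-A*P/D)"
  define Pi where "Pi = (1 - A*P/B*x)*(1 - A*P/C*x)*(1 - A*P/D*x)"
  define zz where "zz = 1 - A*P/(B*C*D)"
  define M where "M = (1-A*P/(B*C))*(1-A*P/(B*D))*(1-A*P/(C*D))"
  have xx: "complex_of_real (p^n) = x" by (simp add: x_def P_def)
  have Pinz: "Pi \<noteq> 0" unfolding Pi_def using hB[of n] hC[of n] hD[of n]
    by (simp add: xx[symmetric] P_def)
  have Px: "1 - P*x \<noteq> 0"
  proof
    assume "1 - P*x = 0"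
    hence "complex_of_real (p ^ Suc n) = 1" by (simp add: P_def x_def)
    moreover have "p ^ Suc n < 1" using p by (rule power_Suc_less_one)
    ultimately show False by (metis less_irrefl of_real_eq_1_iff)
  qed
  have Tr0: "T * (1-A) * Pi = S * (1-A*x) * K * x"
    using sv_shift[OF p hB hC hD, of n]
    unfolding T_def S_def K_def Pi_def x_def P_def .
  have Tr: "T*(1-A) = S*(1-A*x)*K*x/Pi"
    using Tr0 Pinz by (simp add: eq_divide_eq)
  have S1: "sv p B C D A (Suc n) = S * ((1-A*x)*(1-B*x)*(1-C*x)*(1-D*x)*(A*P/(B*C*D))
              / ((1-P*x)*Pi))"
    unfolding S_def Pi_def x_def P_def by (rule sv_Suc)
  have pw: "P ^ (2*n) = x^2" unfolding x_def by (simp only: mult.commute[of 2 n] power_mult)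
  have L: "tv p B C D A n * (K * zz) - tv p B C D (A*P) n * ((1-A)*M)
      = (1-A*x^2)*S*(K*zz) - (1-A*P*x^2)*(T*(1-A))*M"
    unfolding tv_def S_def T_def by (simp only: P_def[symmetric] pw mult.assoc)
  have E: "(1-A*x^2)*S*(K*zz) - (1-A*P*x^2)*(T*(1-A))*M
      = -K * (S * ((1-A*x)*(1-B*x)*(1-C*x)*(1-D*x)*(A*P/(B*C*D)) / ((1-P*x)*Pi))) * (1 - P*x) * (1 - A*(A*P/(B*C*D))*(P*x))
        - (-K * S * (1 - x) * (1 - A*(A*P/(B*C*D))*x))"
    unfolding Tr
    by (rule abstr[OF Pinz Px]) (unfold Pi_def zz_def M_def, rule polyid[OF nz])
  have R: "gv p B C D A (Suc n) - gv p B C D A n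
      = -K * sv p B C D A (Suc n) * (1 - P*x) * (1 - A*(A*P/(B*C*D))*(P*x))
        - (-K * S * (1 - x) * (1 - A*(A*P/(B*C*D))*x))"
    unfolding gv_def K_def S_def x_def P_def by (simp only: power_Suc)
  show ?thesis
    using L E R unfolding S1 K_def P_def zz_def M_def by simp
qed



lemma sv_bound:
  assumes "0 \<le> u1" "0 \<le> u2" "0 \<le> u3" "0 \<le> u4" "0 < w1" "0 < w2" "0 < w3" "0 < w4"
    and "norm (qp A p n) \<le> u1" "norm (qp B p n) \<le> u2" "norm (qp C p n) \<le> u3" "norm (qp D p n) \<le> u4"
    and "w1 \<le> norm (qp (complex_of_real p) p n)" "w2 \<le> norm (qp (A * complex_of_real p / B) p n)"
        "w3 \<le> norm (qp (A * complex_of_real p / C) p n)" "w4 \<le> norm (qp (A * complex_of_real p / D) p n)"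
  shows "norm (sv p B C D A n) \<le> (u1*u2*u3*u4)/(w1*w2*w3*w4) * norm (A * complex_of_real p / (B*C*D)) ^ n"
proof -
  have num: "norm (qp A p n * qp B p n * qp C p n * qp D p n) \<le> u1*u2*u3*u4"
    unfolding norm_mult using assms by (intro mult_mono) auto
  have den: "w1*w2*w3*w4 \<le> norm (qp (complex_of_real p) p n * qp (A * complex_of_real p / B) p n
        * qp (A * complex_of_real p / C) p n * qp (A * complex_of_real p / D) p n)"
    unfolding norm_mult using assms by (intro mult_mono) auto
  have vpos: "0 < w1*w2*w3*w4" using assms by simp
  have "norm (qp A p n * qp B p n * qp C p n * qp D p n) / norm (qp (complex_of_real p) p n * qp (A * complex_of_real p / B) p n
        * qp (A * complex_of_real p / C) p n * qp (A * complex_of_real p / D) p n) \<le> (u1*u2*u3*u4)/(w1*w2*w3*w4)"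
    by (rule frac_le) (use num den vpos assms in auto)
  thus ?thesis unfolding sv_def norm_mult norm_divide norm_power
    by (intro mult_right_mono) auto
qed

lemma pc_hyp:
  assumes "0 < p" "p < 1"
  shows "complex_of_real p * complex_of_real (p^k) \<noteq> 1"
proof -
  have "p ^ Suc k < 1" using assms by (rule power_Suc_less_one)
  hence "complex_of_real (p ^ Suc k) \<noteq> 1" by (metis less_irrefl of_real_eq_1_iff)
  thus ?thesis by simp
qed

lemma sv_bound_ex:
  assumes p: "0 < p" "p < 1"
    and hB: "\<And>k. A * complex_of_real p / B * complex_of_real (p^k) \<noteq> 1"
    and hC: "\<And>k. A * complex_of_real p / C * complex_of_real (p^k) \<noteq> 1"
    and hD: "\<And>k. A * complex_of_real p / D * complex_of_real (p^k) \<noteq> 1"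
  shows "\<exists>Kc. \<forall>n. norm (sv p B C D A n) \<le> Kc * norm (A * complex_of_real p / (B*C*D)) ^ n"
proof -
  obtain w1 where w1: "w1 > 0" "\<forall>n. w1 \<le> norm (qp (complex_of_real p) p n)"
    using qp_lower_gen[OF p pc_hyp[OF p]] by blast
  obtain w2 where w2: "w2 > 0" "\<forall>n. w2 \<le> norm (qp (A * complex_of_real p / B) p n)"
    using qp_lower_gen[OF p hB] by blast
  obtain w3 where w3: "w3 > 0" "\<forall>n. w3 \<le> norm (qp (A * complex_of_real p / C) p n)"
    using qp_lower_gen[OF p hC] by blast
  obtain w4 where w4: "w4 > 0" "\<forall>n. w4 \<le> norm (qp (A * complex_of_real p / D) p n)"
    using qp_lower_gen[OF p hD] by blast
  have pp: "0 \<le> p" "p < 1" using p by auto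
  show ?thesis
    by (rule exI[of _ "(exp (norm A/(1-p))*exp (norm B/(1-p))*exp (norm C/(1-p))*exp (norm D/(1-p)))/(w1*w2*w3*w4)"],
        rule allI, rule sv_bound)
       (use w1 w2 w3 w4 qp_upper[OF pp] in auto)
qed

lemma tv_bound_ex:
  assumes p: "0 < p" "p < 1"
    and hB: "\<And>k. A * complex_of_real p / B * complex_of_real (p^k) \<noteq> 1"
    and hC: "\<And>k. A * complex_of_real p / C * complex_of_real (p^k) \<noteq> 1"
    and hD: "\<And>k. A * complex_of_real p / D * complex_of_real (p^k) \<noteq> 1"
  shows "\<exists>Kc. \<forall>n. norm (tv p B C D A n) \<le> Kc * norm (A * complex_of_real p / (B*C*D)) ^ n"
proof -
  obtain Kc where Kc: "\<And>n. norm (sv p B C D A n) \<le> Kc * norm (A * complex_of_real p / (B*C*D)) ^ n"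
    using sv_bound_ex[OF p hB hC hD] by blast
  have "norm (tv p B C D A n) \<le> ((1 + norm A) * Kc) * norm (A * complex_of_real p / (B*C*D)) ^ n" for n
  proof -
    have "norm (1 - A * complex_of_real p ^ (2*n)) \<le> 1 + norm A * p^(2*n)"
      using norm_triangle_ineq4[of 1 "A * complex_of_real p ^ (2*n)"] p by (simp add: norm_mult)
    also have "\<dots> \<le> 1 + norm A" using p by (simp add: mult_left_le power_le_one)
    finally have a: "norm (1 - A * complex_of_real p ^ (2*n)) \<le> 1 + norm A" .
    have "norm (tv p B C D A n) \<le> (1 + norm A) * (Kc * norm (A * complex_of_real p / (B*C*D)) ^ n)"
      unfolding tv_def norm_mult by (intro mult_mono a Kc) auto
    thus ?thesis by (simp add: mult_ac)
  qed
  thus ?thesis by blast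
qed

lemma geom_bound_summable:
  fixes f :: "nat \<Rightarrow> complex"
  assumes "\<And>n. norm (f n) \<le> Kc * r ^ n" "0 \<le> r" "r < 1"
  shows "summable f"
  by (rule summable_comparison_test[of _ "\<lambda>n. Kc * r^n"])
     (use assms in \<open>auto intro!: summable_mult summable_geometric\<close>)

lemma geom_bound_zero:
  fixes f :: "nat \<Rightarrow> complex"
  assumes "\<And>n. norm (f n) \<le> Kc * r ^ n" "0 \<le> r" "r < 1"
  shows "f \<longlonglongrightarrow> 0"
proof -
  have "(\<lambda>n. Kc * r ^ n) \<longlonglongrightarrow> 0"
    using assms by (intro tendsto_mult_right_zero LIMSEQ_power_zero) auto
  thus ?thesis by (rule Lim_null_comparison[rotated]) (use assms in auto)
qed

lemma contig:
  assumes p: "0 < p" "p < 1"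
    and hB: "\<And>k. A * complex_of_real p / B * complex_of_real (p^k) \<noteq> 1"
    and hC: "\<And>k. A * complex_of_real p / C * complex_of_real (p^k) \<noteq> 1"
    and hD: "\<And>k. A * complex_of_real p / D * complex_of_real (p^k) \<noteq> 1"
    and nz: "B \<noteq> 0" "C \<noteq> 0" "D \<noteq> 0"
    and z: "norm (A * complex_of_real p / (B*C*D)) < 1"
  shows "summable (tv p B C D A)"
    "suminf (tv p B C D A) * (((1-A*complex_of_real p/B)*(1-A*complex_of_real p/C)*(1-A*complex_of_real p/D))
            * (1 - A*complex_of_real p/(B*C*D)))
     = suminf (tv p B C D (A*complex_of_real p)) * ((1-A)*((1-A*complex_of_real p/(B*C))
            * (1-A*complex_of_real p/(B*D))*(1-A*complex_of_real p/(C*D))))"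
proof -
  let ?P = "complex_of_real p"
  let ?z = "A * ?P / (B*C*D)"
  have sh: "A * ?P * ?P / X * complex_of_real (p^k) \<noteq> 1"
    if h: "\<And>k. A * ?P / X * complex_of_real (p^k) \<noteq> 1" for X k
    using h[of "Suc k"] by (simp add: mult_ac)
  have z2: "A * ?P * ?P / (B*C*D) = ?z * ?P" by simp
  have zn0: "norm (?z * ?P) = norm ?z * p" using p by (simp only: norm_mult norm_of_real abs_of_pos)
  have zn: "norm (?z * ?P) \<le> norm ?z" unfolding zn0 using p by (intro mult_left_le) auto
  obtain K1 where K1: "\<And>n. norm (tv p B C D A n) \<le> K1 * norm ?z ^ n"
    using tv_bound_ex[OF p hB hC hD] by blast
  obtain K2 where K2: "\<And>n. norm (tv p B C D (A*?P) n) \<le> K2 * norm (?z * ?P) ^ n"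
    using tv_bound_ex[OF p sh[OF hB] sh[OF hC] sh[OF hD]] unfolding z2 by blast
  obtain K3 where K3: "\<And>n. norm (sv p B C D A n) \<le> K3 * norm ?z ^ n"
    using sv_bound_ex[OF p hB hC hD] by blast
  have K3pos: "0 \<le> K3" using K3[of 0] by (simp add: sv_def)
  show s1: "summable (tv p B C D A)"
    by (rule geom_bound_summable[OF K1]) (use z in auto)
  have s2: "summable (tv p B C D (A*?P))"
    by (rule geom_bound_summable[OF K2]) (use z zn in auto)
  have g0: "gv p B C D A \<longlonglongrightarrow> 0"
  proof -
    define c where "c = norm ((1-A*?P/B)*(1-A*?P/C)*(1-A*?P/D)) * 2 * (1 + norm (A*?z))"
    have "norm (gv p B C D A n) \<le> (c * K3) * norm ?z ^ n" for n
    proof -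
      have pn: "p ^ n \<le> 1" using p by (simp add: power_le_one)
      have a: "norm (1 - ?P ^ n) \<le> 2"
        using norm_triangle_ineq4[of 1 "?P ^ n"] p pn by simp
      have nb: "norm (A*?z*?P ^ n) = norm (A*?z) * p ^ n"
        using p by (simp only: norm_mult norm_power norm_of_real abs_of_pos)
      have nb2: "norm (A*?z) * p ^ n \<le> norm (A*?z)" using pn p by (intro mult_left_le) auto
      have b: "norm (1 - A*?z*?P ^ n) \<le> 1 + norm (A*?z)"
        using norm_triangle_ineq4[of 1 "A*?z*?P ^ n"] nb nb2 by simp
      have "norm (gv p B C D A n) = norm ((1-A*?P/B)*(1-A*?P/C)*(1-A*?P/D)) * norm (sv p B C D A n)
           * norm (1 - ?P ^ n) * norm (1 - A*?z*?P ^ n)"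
        unfolding gv_def by (simp add: norm_mult)
      also have "\<dots> \<le> norm ((1-A*?P/B)*(1-A*?P/C)*(1-A*?P/D)) * (K3 * norm ?z ^ n) * 2 * (1 + norm (A*?z))"
        by (intro mult_mono a b K3 mult_left_mono) (auto intro!: mult_nonneg_nonneg K3pos)
      finally show ?thesis by (simp add: c_def mult_ac)
    qed
    thus ?thesis by (rule geom_bound_zero) (use z in auto)
  qed
  have "(\<lambda>n. gv p B C D A (Suc n) - gv p B C D A n) sums (0 - gv p B C D A 0)"
    by (rule telescope_sums[OF g0])
  moreover have "gv p B C D A 0 = 0" by (simp add: gv_def)
  ultimately have "(\<lambda>n. tv p B C D A n * (((1-A*?P/B)*(1-A*?P/C)*(1-A*?P/D)) * (1 - ?z))
       - tv p B C D (A*?P) n * ((1-A)*((1-A*?P/(B*C)) * (1-A*?P/(B*D))*(1-A*?P/(C*D))))) sums 0"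
    using tele[OF p hB hC hD nz] by simp
  moreover have "(\<lambda>n. tv p B C D A n * (((1-A*?P/B)*(1-A*?P/C)*(1-A*?P/D)) * (1 - ?z))
       - tv p B C D (A*?P) n * ((1-A)*((1-A*?P/(B*C)) * (1-A*?P/(B*D))*(1-A*?P/(C*D))))) sums
       (suminf (tv p B C D A) * (((1-A*?P/B)*(1-A*?P/C)*(1-A*?P/D)) * (1 - ?z))
       - suminf (tv p B C D (A*?P)) * ((1-A)*((1-A*?P/(B*C)) * (1-A*?P/(B*D))*(1-A*?P/(C*D)))))"
    by (intro sums_diff sums_mult2 summable_sums s1 s2)
  ultimately show "suminf (tv p B C D A) * (((1-A*?P/B)*(1-A*?P/C)*(1-A*?P/D)) * (1 - ?z))
       = suminf (tv p B C D (A*?P)) * ((1-A)*((1-A*?P/(B*C)) * (1-A*?P/(B*D))*(1-A*?P/(C*D))))"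
    using sums_unique2 by fastforce
qed



lemma exp_half_bound:
  fixes a p :: real
  assumes "0 \<le> a" "a \<le> 1/2" "p < 1"
  shows "exp (-1/(1-p)) \<le> exp (-2*a/(1-p))"
proof -
  have "-1 \<le> -2*a" using assms by simp
  hence "-1/(1-p) \<le> -2*a/(1-p)" using assms by (intro divide_right_mono) auto
  thus ?thesis by simp
qed

lemma tail_bound:
  assumes p: "0 < p" "p < 1"
    and a: "norm A \<le> 1/2"
    and aB: "norm (A * complex_of_real p / B) \<le> 1/2"
    and aC: "norm (A * complex_of_real p / C) \<le> 1/2"
    and aD: "norm (A * complex_of_real p / D) \<le> 1/2"
    and zh: "norm (A * complex_of_real p / (B*C*D)) \<le> 1/2"
    and c0: "0 < c0" "\<And>n. c0 \<le> norm (qp (complex_of_real p) p n)"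
  shows "norm (suminf (tv p B C D A) - 1) \<le> norm A +
     4 * ((exp (1/(1-p)) * exp (norm B/(1-p)) * exp (norm C/(1-p)) * exp (norm D/(1-p)))
          / (c0 * exp (-1/(1-p)) * exp (-1/(1-p)) * exp (-1/(1-p))))
       * norm (A * complex_of_real p / (B*C*D))"
proof -
  define K0 where "K0 = (exp (1/(1-p)) * exp (norm B/(1-p)) * exp (norm C/(1-p)) * exp (norm D/(1-p)))
          / (c0 * exp (-1/(1-p)) * exp (-1/(1-p)) * exp (-1/(1-p)))"
  define r where "r = norm (A * complex_of_real p / (B*C*D))"
  have K0pos: "0 \<le> K0" unfolding K0_def using c0 by simp
  have pp: "0 \<le> p" "p < 1" using p by auto
  have low: "exp (-1/(1-p)) \<le> norm (qp a p n)" if "norm a \<le> 1/2" for a n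
    by (rule order_trans[OF exp_half_bound[of "norm a" p] qp_lower[OF pp that, of n]]) (use that p in auto)
  have upA: "norm (qp A p n) \<le> exp (1/(1-p))" for n
  proof -
    have "norm A / (1-p) \<le> 1/(1-p)" using a p by (intro divide_right_mono) auto
    thus ?thesis using qp_upper[OF pp, of A n] by (meson exp_le_cancel_iff order_trans)
  qed
  have sb: "norm (sv p B C D A n) \<le> K0 * r ^ n" for n
    unfolding K0_def r_def
    by (rule sv_bound) (use c0 upA qp_upper[OF pp] low aB aC aD in auto)
  have tb: "norm (tv p B C D A n) \<le> (2*K0) * r ^ n" for n
  proof -
    have "norm (1 - A * complex_of_real p ^ (2*n)) \<le> 1 + norm A * p^(2*n)"
      using norm_triangle_ineq4[of 1 "A * complex_of_real p ^ (2*n)"] p by (simp add: norm_mult)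
    also have "\<dots> \<le> 1 + norm A" using p by (simp add: mult_left_le power_le_one)
    also have "\<dots> \<le> 2" using a by simp
    finally have "norm (1 - A * complex_of_real p ^ (2*n)) \<le> 2" .
    hence "norm (tv p B C D A n) \<le> 2 * (K0 * r ^ n)"
      unfolding tv_def norm_mult by (intro mult_mono sb) auto
    thus ?thesis by simp
  qed
  have r: "0 \<le> r" "r \<le> 1/2" using zh by (auto simp: r_def)
  have sum: "summable (tv p B C D A)"
    by (rule geom_bound_summable[OF tb]) (use r in auto)
  have t0: "tv p B C D A 0 = 1 - A" by (simp add: tv_def sv_def)
  have eq: "suminf (tv p B C D A) - 1 = (\<Sum>n. tv p B C D A (Suc n)) - A"
    using suminf_split_head[OF sum] t0 by simp
  have gs: "summable (\<lambda>n. (2*K0) * r ^ Suc n)"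
    using r by (intro summable_mult summable_geometric[THEN summable_Suc_iff[THEN iffD2]]) auto
  have "norm (\<Sum>n. tv p B C D A (Suc n)) \<le> (\<Sum>n. (2*K0) * r ^ Suc n)"
    by (rule norm_suminf_le[OF tb gs])
  also have "(\<Sum>n. (2*K0) * r ^ Suc n) = (2*K0*r) * (\<Sum>n. r ^ n)"
    by (subst suminf_mult[symmetric]) (use r in \<open>auto intro: summable_geometric simp: mult_ac\<close>)
  also have "\<dots> = 2*K0*r / (1 - r)" using r by (simp add: suminf_geometric)
  also have "\<dots> \<le> 4*K0*r"
  proof -
    have "2*K0*r \<le> 4*K0*r*(1-r)"
    proof -
      have "0 \<le> 2*K0*r*(1 - 2*r)" using r K0pos by (intro mult_nonneg_nonneg) auto
      thus ?thesis by (simp add: algebra_simps)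
    qed
    thus ?thesis using r by (simp add: divide_le_eq)
  qed
  finally have "norm (\<Sum>n. tv p B C D A (Suc n)) \<le> 4*K0*r" .
  hence "norm (suminf (tv p B C D A) - 1) \<le> 4*K0*r + norm A"
    unfolding eq using norm_triangle_ineq4[of "\<Sum>n. tv p B C D A (Suc n)" A] by linarith
  thus ?thesis unfolding K0_def r_def by simp
qed



lemma norm_mul_pow:
  assumes "0 < p"
  shows "norm (w * complex_of_real p ^ m) = norm w * p ^ m"
  using assms by (simp add: norm_mult norm_power)

lemma mul_pow_zero:
  assumes "0 < p" "p < 1"
  shows "(\<lambda>m. norm (w * complex_of_real p ^ m)) \<longlonglongrightarrow> 0"
  unfolding norm_mul_pow[OF assms(1)]
  using assms by (intro tendsto_mult_right_zero LIMSEQ_power_zero) auto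

lemma core:
  assumes p: "0 < p" "p < 1"
    and hB: "\<And>k. A * complex_of_real p / B * complex_of_real (p^k) \<noteq> 1"
    and hC: "\<And>k. A * complex_of_real p / C * complex_of_real (p^k) \<noteq> 1"
    and hD: "\<And>k. A * complex_of_real p / D * complex_of_real (p^k) \<noteq> 1"
    and nz: "B \<noteq> 0" "C \<noteq> 0" "D \<noteq> 0"
    and z: "norm (A * complex_of_real p / (B*C*D)) < 1"
  shows "tv p B C D A sums
    (qpoch_inf A p * qpoch_inf (A * complex_of_real p/(B*C)) p * qpoch_inf (A * complex_of_real p/(B*D)) p
       * qpoch_inf (A * complex_of_real p/(C*D)) p
     / (qpoch_inf (A * complex_of_real p/B) p * qpoch_inf (A * complex_of_real p/C) p
       * qpoch_inf (A * complex_of_real p/D) p * qpoch_inf (A * complex_of_real p/(B*C*D)) p))"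
proof -
  define P where "P = complex_of_real p"
  define NN where "NN = (\<lambda>A. ((1-A*P/B)*(1-A*P/C)*(1-A*P/D)) * (1 - A*P/(B*C*D)))"
  define MM where "MM = (\<lambda>A. (1-A)*((1-A*P/(B*C))*(1-A*P/(B*D))*(1-A*P/(C*D))))"
  define L where "L = (\<lambda>A. suminf (tv p B C D A))"
  have sh: "A * P^m * P / X * complex_of_real (p^k) \<noteq> 1"
    if h: "\<And>k. A * P / X * complex_of_real (p^k) \<noteq> 1" for X m k
    using h[of "m+k"] by (simp add: P_def power_add mult_ac)
  have zm: "norm (A * P^m * P / (B*C*D)) < 1" for m
  proof -
    have "norm (A * P^m * P / (B*C*D)) = norm (A * P / (B*C*D)) * p^m"
      using p by (simp add: P_def norm_mult norm_power norm_divide)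
    also have "\<dots> \<le> norm (A * P / (B*C*D))" using p by (intro mult_left_le) (auto simp: power_le_one)
    finally show ?thesis using z by (simp add: P_def)
  qed
  have step: "L (A * P^m) * NN (A * P^m) = L (A * P^Suc m) * MM (A * P^m)" for m
  proof -
    have e: "A * complex_of_real p^m * complex_of_real p = A * complex_of_real p^Suc m" by (simp add: mult_ac)
    show ?thesis
      using contig(2)[OF p sh[OF hB[folded P_def], unfolded P_def] sh[OF hC[folded P_def], unfolded P_def]
          sh[OF hD[folded P_def], unfolded P_def] nz zm[unfolded P_def], of m]
      unfolding L_def NN_def MM_def P_def e .
  qed
  have iter: "L A * (\<Prod>k<m. NN (A * P^k)) = L (A * P^m) * (\<Prod>k<m. MM (A * P^k))" for m
  proof (induction m)
    case 0 show ?case by simp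
  next
    case (Suc m)
    have "L A * (\<Prod>k<Suc m. NN (A * P^k)) = (L A * (\<Prod>k<m. NN (A * P^k))) * NN (A * P^m)"
      by (simp add: mult_ac)
    also have "\<dots> = (L (A * P^m) * NN (A * P^m)) * (\<Prod>k<m. MM (A * P^k))"
      unfolding Suc by (simp add: mult_ac)
    also have "\<dots> = L (A * P^Suc m) * (\<Prod>k<Suc m. MM (A * P^k))"
      unfolding step by (simp add: mult_ac)
    finally show ?case .
  qed
  have prodN: "(\<Prod>k<m. NN (A * P^k)) = qp (A*P/B) p m * qp (A*P/C) p m * qp (A*P/D) p m * qp (A*P/(B*C*D)) p m" for m
    unfolding NN_def qp_def P_def prod.distrib[symmetric] by (intro prod.cong refl) (simp add: mult_ac)
  have prodM: "(\<Prod>k<m. MM (A * P^k)) = qp A p m * qp (A*P/(B*C)) p m * qp (A*P/(B*D)) p m * qp (A*P/(C*D)) p m" for m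
    unfolding MM_def qp_def P_def prod.distrib[symmetric] by (intro prod.cong refl) (simp add: mult_ac)
  define Den where "Den = qpoch_inf (A*P/B) p * qpoch_inf (A*P/C) p * qpoch_inf (A*P/D) p * qpoch_inf (A*P/(B*C*D)) p"
  define Num where "Num = qpoch_inf A p * qpoch_inf (A*P/(B*C)) p * qpoch_inf (A*P/(B*D)) p * qpoch_inf (A*P/(C*D)) p"
  have limN: "(\<lambda>m. L A * (\<Prod>k<m. NN (A * P^k))) \<longlonglongrightarrow> L A * Den"
    unfolding prodN Den_def by (intro tendsto_intros qp_tendsto p)
  have limM: "(\<lambda>m. (\<Prod>k<m. MM (A * P^k))) \<longlonglongrightarrow> Num"
    unfolding prodM Num_def by (intro tendsto_intros qp_tendsto p)
  obtain c0 where c0: "0 < c0" "\<And>n. c0 \<le> norm (qp (complex_of_real p) p n)"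
    using qp_lower_gen[OF p pc_hyp[OF p]] by blast
  define K0 where "K0 = (exp (1/(1-p)) * exp (norm B/(1-p)) * exp (norm C/(1-p)) * exp (norm D/(1-p)))
          / (c0 * exp (-1/(1-p)) * exp (-1/(1-p)) * exp (-1/(1-p)))"
  have ev: "eventually (\<lambda>m. norm (L (A * P^m) - 1) \<le> norm (A * P^m) + 4 * K0 * norm (A * P^m * P / (B*C*D))) sequentially"
  proof -
    have e1: "eventually (\<lambda>m. norm (w * P^m) < 1/2) sequentially" for w
      by (rule order_tendstoD(2)[OF mul_pow_zero[OF p, of w, folded P_def]]) simp
    have eq1: "A * P^m * P / X = (A*P/X) * P^m" for X m by simp
    show ?thesis
      using e1[of A] e1[of "A*P/B"] e1[of "A*P/C"] e1[of "A*P/D"] e1[of "A*P/(B*C*D)"]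
    proof (eventually_elim)
      case (elim m)
      show ?case unfolding L_def K0_def
        by (rule tail_bound[OF p, folded P_def]) (use elim[unfolded eq1[symmetric]] c0[folded P_def] in auto)
    qed
  qed
  have eq2: "A * P^m * P / (B*C*D) = (A*P/(B*C*D)) * P^m" for m by simp
  have g0: "(\<lambda>m. norm (A * P^m) + 4 * K0 * norm (A * P^m * P / (B*C*D))) \<longlonglongrightarrow> 0"
    unfolding eq2 using tendsto_add[OF mul_pow_zero[OF p, of A] tendsto_mult_left[OF mul_pow_zero[OF p, of "A*P/(B*C*D)"], of "4*K0"]]
    unfolding P_def by simp
  have "(\<lambda>m. L (A * P^m) - 1) \<longlonglongrightarrow> 0"
    by (rule Lim_null_comparison[OF ev g0])
  hence lim1: "(\<lambda>m. L (A * P^m)) \<longlonglongrightarrow> 1"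
    using tendsto_add[OF _ tendsto_const[of 1]] by fastforce
  have limM2: "(\<lambda>m. L (A * P^m) * (\<Prod>k<m. MM (A * P^k))) \<longlonglongrightarrow> 1 * Num"
    by (intro tendsto_mult lim1 limM)
  have "L A * Den = 1 * Num"
    using LIMSEQ_unique[OF limN] limM2 iter by simp
  moreover have "Den \<noteq> 0"
  proof -
    have zk: "A*P/(B*C*D) * complex_of_real (p^k) \<noteq> 1" for k
    proof
      assume h: "A*P/(B*C*D) * complex_of_real (p^k) = 1"
      have n1: "norm (complex_of_real (p^k)) = p^k" using p by simp
      have "norm (A*P/(B*C*D) * complex_of_real (p^k)) = norm (A*P/(B*C*D)) * p^k"
        by (simp only: norm_mult n1)
      also have "\<dots> \<le> norm (A*P/(B*C*D))"
        using p by (intro mult_left_le) (auto simp: power_le_one)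
      finally have "norm (A*P/(B*C*D) * complex_of_real (p^k)) \<le> norm (A*P/(B*C*D))" .
      with h z show False by (simp add: P_def)
    qed
    show ?thesis unfolding Den_def
      using qpoch_inf_nz[OF p hB] qpoch_inf_nz[OF p hC] qpoch_inf_nz[OF p hD] qpoch_inf_nz[OF p zk]
      by (simp add: P_def)
  qed
  ultimately have "L A = Num / Den" by (simp add: eq_divide_eq)
  moreover have "summable (tv p B C D A)"
    by (rule contig(1)[OF p hB hC hD nz z])
  ultimately show ?thesis unfolding L_def Num_def Den_def P_def
    using summable_sums by fastforce
qed



lemma qpow_add: "qpow r (x + y) = qpow r x * qpow r y"
  unfolding qpow_def by (simp add: distrib_right exp_add)

lemma qpow_diff: "qpow r (x - y) = qpow r x / qpow r y"
  unfolding qpow_def by (simp add: left_diff_distrib exp_diff)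

lemma qpow_nz: "qpow r x \<noteq> 0"
  unfolding qpow_def by simp

lemma qpow_0 [simp]: "qpow r 0 = 1"
  unfolding qpow_def by simp

lemma qpow_nat: "0 < r \<Longrightarrow> qpow r (of_nat n) = complex_of_real r ^ n"
  unfolding qpow_def by (simp add: exp_of_nat_mult exp_of_real)

lemma qpow_1: "0 < r \<Longrightarrow> qpow r 1 = complex_of_real r"
  using qpow_nat[of r 1] by simp

lemma qpow_mult_nat: "qpow r (x * of_nat n) = qpow r x ^ n"
proof -
  have "x * of_nat n * complex_of_real (ln r) = of_nat n * (x * complex_of_real (ln r))" by simp
  thus ?thesis unfolding qpow_def by (simp only: exp_of_nat_mult)
qed

lemma qpow_sq: "0 < q \<Longrightarrow> qpow q (2 * x) = qpow (q^2) x"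
  unfolding qpow_def by (simp add: ln_realpow mult_ac)

lemma norm_qpow: "norm (qpow r x) = exp (Re x * ln r)"
  unfolding qpow_def by simp

lemma Q_nz:
  assumes "0 < p" "p < 1" "\<not> qgamma_pole p x"
  shows "qpoch_inf (qpow p x) p \<noteq> 0"
proof (rule qpoch_inf_nz[OF assms(1,2)])
  fix k
  have "qpow p (x + of_nat k) \<noteq> 1" using assms(3) unfolding qgamma_pole_def by blast
  thus "qpow p x * complex_of_real (p^k) \<noteq> 1" using assms by (simp add: qpow_add qpow_nat)
qed

lemma Q_split:
  assumes "0 < p" "p < 1"
  shows "qpoch_inf (qpow p x) p = qp (qpow p x) p n * qpoch_inf (qpow p (x + of_nat n)) p"
  using qpoch_inf_split[OF assms, of "qpow p x" n] assms by (simp add: qpow_add qpow_nat)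

lemma Pc_nz:
  assumes "0 < p" "p < 1"
  shows "qpoch_inf (complex_of_real p) p \<noteq> 0"
  by (rule qpoch_inf_nz[OF assms pc_hyp[OF assms]])

lemma qshift_eq:
  assumes p: "0 < p" "p < 1"
    and nz: "qpoch_inf (qpow p x) p \<noteq> 0" "qpoch_inf (qpow p (x + s)) p \<noteq> 0"
  shows "qshift p x s = qpoch_inf (qpow p x) p / qpoch_inf (qpow p (x + s)) p * qpow (1 - p) (- s)"
proof -
  have w: "qpow (1-p) (1 - (x + s)) = qpow (1-p) (1 - x) * qpow (1-p) (- s)"
    unfolding qpow_add[symmetric] by (simp add: algebra_simps)
  show ?thesis
    unfolding qshift_def qgamma_def w
    using nz Pc_nz[OF p] qpow_nz[of "1-p" "1-x"] qpow_nz[of "1-p" "-s"]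
    by (simp add: field_simps)
qed

lemma qshift_G:
  assumes p: "0 < p" "p < 1"
    and nz: "qpoch_inf (qpow p x) p \<noteq> 0" "qpoch_inf (qpow p y) p \<noteq> 0"
    and e: "x + s = y + of_nat n"
  shows "qshift p x s = qpoch_inf (qpow p x) p / qpoch_inf (qpow p y) p * qp (qpow p y) p n * qpow (1 - p) (- s)"
proof -
  have sp: "qpoch_inf (qpow p y) p = qp (qpow p y) p n * qpoch_inf (qpow p (x + s)) p"
    unfolding e by (rule Q_split[OF p])
  have nz2: "qpoch_inf (qpow p (x + s)) p \<noteq> 0" "qp (qpow p y) p n \<noteq> 0"
    using nz(2) sp by auto
  show ?thesis
    unfolding qshift_eq[OF p nz(1) nz2(1)] sp
    using nz2 by (simp add: field_simps)
qed

lemma qfact_eq: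
  assumes "0 < p" "p < 1"
  shows "qfact p n = qp (complex_of_real p) p n / (1 - complex_of_real p) ^ n"
proof (induction n)
  case 0 show ?case by (simp add: qfact_def)
next
  case (Suc n)
  have ne: "1 - complex_of_real p \<noteq> 0" using assms by simp
  have "qfact p (Suc n) = qfact p n * qint p (of_nat (Suc n))"
    unfolding qfact_def by simp
  also have "qint p (of_nat (Suc n)) = (1 - complex_of_real p ^ Suc n) / (1 - complex_of_real p)"
    unfolding qint_def qpow_nat[OF assms(1)] by simp
  finally show ?case unfolding Suc qp_Suc using ne by (simp add: field_simps)
qed



lemma E1: "0 < r \<Longrightarrow> qpow r (1 + u - v) = qpow r u * complex_of_real r / qpow r v"
  by (simp add: qpow_add qpow_diff qpow_1 mult_ac)

lemma E2: "0 < r \<Longrightarrow> qpow r (1 + u - v - w) = qpow r u * complex_of_real r / (qpow r v * qpow r w)"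
  by (simp add: qpow_add qpow_diff qpow_1 mult_ac)

lemma E3: "0 < r \<Longrightarrow> qpow r (1 + u - v - w - x) = qpow r u * complex_of_real r / (qpow r v * qpow r w * qpow r x)"
  by (simp add: qpow_add qpow_diff qpow_1 mult_ac)

lemma pole_hyp:
  assumes "0 < p" "\<not> qgamma_pole p x"
  shows "qpow p x * complex_of_real (p^k) \<noteq> 1"
proof -
  have "qpow p (x + of_nat k) \<noteq> 1" using assms(2) unfolding qgamma_pole_def by blast
  thus ?thesis using assms by (simp add: qpow_add qpow_nat)
qed

lemma qshift_B:
  assumes p: "0 < p" "p < 1"
    and nz: "qpoch_inf (qpow p x) p \<noteq> 0" "qpoch_inf (qpow p y) p \<noteq> 0"
    and e: "x + s = y"
  shows "qshift p x s = qpoch_inf (qpow p x) p / qpoch_inf (qpow p y) p * qpow (1 - p) (- s)"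
  using qshift_G[OF p nz, of s 0] e by simp

lemma alg_rhs:
  fixes G R1 R2 R3 R4 R5 R6 R7 R8 S1 S2 S3 T1 T2 T3 T4 T5 T6 T7 V1 V2 V3 V4 V5 V6 V7 V8 X1 X2 X3 X4 X5 X6 X7 :: complex
  assumes "G \<noteq> 0" "R1 \<noteq> 0" "R2 \<noteq> 0" "R3 \<noteq> 0" "R4 \<noteq> 0" "R5 \<noteq> 0" "R6 \<noteq> 0" "R7 \<noteq> 0" "R8 \<noteq> 0"
    "S1 \<noteq> 0" "S2 \<noteq> 0" "S3 \<noteq> 0" "T1 \<noteq> 0" "T2 \<noteq> 0" "T3 \<noteq> 0" "T4 \<noteq> 0" "T5 \<noteq> 0" "T6 \<noteq> 0" "T7 \<noteq> 0"
    "V1 \<noteq> 0" "V2 \<noteq> 0" "V3 \<noteq> 0" "V4 \<noteq> 0" "V5 \<noteq> 0" "V6 \<noteq> 0" "V7 \<noteq> 0" "V8 \<noteq> 0"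
    "X1 \<noteq> 0" "X2 \<noteq> 0" "X3 \<noteq> 0" "X4 \<noteq> 0" "X5 \<noteq> 0" "X6 \<noteq> 0" "X7 \<noteq> 0"
  shows "(G/R1*V1)*(G/R2*V2)*(G/R3*V3)*(G/R4*V4) / ((G/R5*V5)*(G/R6*V6)*(G/R7*V7)*(G/R8*V8))
      * ((S1/T1*X1)*(S2/T2*X2)*(S3/T3*X3)*(R4/T4*X4) / ((R6/T5*X5)*(R7/T6*X6)*(R8/T7*X7)))
    = (R5*S1*S2*S3*T5*T6*T7/(R1*R2*R3*T1*T2*T3*T4))
      * (V1*V2*V3*V4/(V5*V6*V7*V8) * (X1*X2*X3*X4/(X5*X6*X7)))"
  using assms by (simp add: field_simps)

lemma alg_final:
  fixes Qa Qb Qc Qd Ra Rb Rc Rd Sb Sc Sd Tb Tc Td N2 N3 N4 D4 P w :: complex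
  assumes "Ra \<noteq> 0" "Rb \<noteq> 0" "Rc \<noteq> 0" "Rd \<noteq> 0" "Sb \<noteq> 0" "Sc \<noteq> 0" "Sd \<noteq> 0"
    "Tb \<noteq> 0" "Tc \<noteq> 0" "Td \<noteq> 0" "D4 \<noteq> 0" "1 - P \<noteq> 0"
  shows "(Qa*Qb*Qc*Qd/(Ra*Rb*Rc*Rd) * (Sb*Sc*Sd/(Tb*Tc*Td)) / (1 - P) * w)
      * (Ra*N2*N3*N4/(Sb*Sc*Sd*D4))
    = (Qa*Qb*Qc*Qd*N2*N3*N4/(Tb*Tc*Td*Rb*Rc*Rd*D4)) * (w / (1 - P))"
  using assms by (simp add: field_simps)

lemma alg_term:
  fixes X P U Z a1 b1 c1 d1 e1 f1 g1 h1 Q1 Q2 Q3 Q4 Q5 Q6 Q7 R1 R2 R3 R4 R5 R6 R7 W1 W2 W3 W4 W5 W6 W7 :: complex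
  assumes "R1 \<noteq> 0" "R2 \<noteq> 0" "R3 \<noteq> 0" "R4 \<noteq> 0" "R5 \<noteq> 0" "R6 \<noteq> 0" "R7 \<noteq> 0"
    "Q5 \<noteq> 0" "Q6 \<noteq> 0" "Q7 \<noteq> 0" "e1 \<noteq> 0" "f1 \<noteq> 0" "g1 \<noteq> 0" "h1 \<noteq> 0"
    "W5 \<noteq> 0" "W6 \<noteq> 0" "W7 \<noteq> 0" "1 - P \<noteq> 0" "U \<noteq> 0"
  shows "(1 - X) * (Q1/R1 * a1 * W1) * (Q2/R2 * b1 * W2) * (Q3/R3 * c1 * W3) * (Q4/R4 * d1 * W4)
      / ((1 - P) * (e1 / U) * (Q5/R5 * f1 * W5) * (Q6/R6 * g1 * W6) * (Q7/R7 * h1 * W7)) * Z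
    = (Q1*Q2*Q3*Q4/(R1*R2*R3*R4) * (R5*R6*R7/(Q5*Q6*Q7)) / (1 - P) * (W1*W2*W3*W4*U/(W5*W6*W7)))
      * ((1 - X) * (a1*b1*c1*d1/(e1*f1*g1*h1) * Z))"
  using assms by (simp add: field_simps)

theorem theorem1p2:
  fixes q :: real and a b c d \<alpha> \<beta> \<gamma> \<delta> :: complex
  assumes "0 < q" "q < 1"
    and "Re (a + b + c + d + 1 + \<alpha> - \<beta> - \<gamma> - \<delta>) > 0"
    and "\<forall>n::nat. \<forall>x \<in> {\<alpha> + a + of_nat n, \<beta> + of_nat n - b, \<gamma> + of_nat n - c,
            \<delta> + of_nat n - d, 1 + \<alpha> - \<beta> + a + b + of_nat n,
            1 + \<alpha> - \<gamma> + a + c + of_nat n, 1 + \<alpha> - \<delta> + a + d + of_nat n}.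
            \<not> qgamma_pole (q^2) x"
    and "\<forall>x \<in> {\<alpha>, \<beta>, \<gamma>, \<delta>, 1 + \<alpha> - \<beta>, 1 + \<alpha> - \<gamma>, 1 + \<alpha> - \<delta>,
            2 + \<alpha> - \<beta> - \<gamma> - \<delta>, 1 + \<alpha> - \<beta> - \<gamma>, 1 + \<alpha> - \<beta> - \<delta>,
            1 + \<alpha> - \<gamma> - \<delta>, \<beta> - b, \<gamma> - c, \<delta> - d,
            2 + \<alpha> - \<beta> - \<gamma> - \<delta> + (a + b + c + d - 1),
            1 + \<alpha> - \<beta> - \<gamma> + (a + b + c), 1 + \<alpha> - \<beta> - \<delta> + (a + b + d),
            1 + \<alpha> - \<gamma> - \<delta> + (a + c + d)}. \<not> qgamma_pole (q^2) x"
  defines "A \<equiv> 2 * (a + b + c + d + 1 + \<alpha> - \<beta> - \<gamma> - \<delta>)"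
  shows "(\<lambda>n. (1 - qpow q (4 * of_nat n + 2 * a + 2 * \<alpha>))
              * qshift (q^2) \<alpha> (a + of_nat n) * qshift (q^2) \<beta> (of_nat n - b)
              * qshift (q^2) \<gamma> (of_nat n - c) * qshift (q^2) \<delta> (of_nat n - d)
           / ((1 - complex_of_real (q^2)) * qfact (q^2) n
              * qshift (q^2) (1 + \<alpha> - \<beta>) (a + b + of_nat n)
              * qshift (q^2) (1 + \<alpha> - \<gamma>) (a + c + of_nat n)
              * qshift (q^2) (1 + \<alpha> - \<delta>) (a + d + of_nat n))
           * qpow q (A * of_nat n))
    sums
     ((qgamma (q^2) (1 + \<alpha> - \<beta>) * qgamma (q^2) (1 + \<alpha> - \<gamma>)
        * qgamma (q^2) (1 + \<alpha> - \<delta>) * qgamma (q^2) (2 + \<alpha> - \<beta> - \<gamma> - \<delta>))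
      / (qgamma (q^2) \<alpha> * qgamma (q^2) (1 + \<alpha> - \<beta> - \<gamma>)
        * qgamma (q^2) (1 + \<alpha> - \<beta> - \<delta>) * qgamma (q^2) (1 + \<alpha> - \<gamma> - \<delta>))
      * ((qshift (q^2) \<beta> (- b) * qshift (q^2) \<gamma> (- c) * qshift (q^2) \<delta> (- d)
          * qshift (q^2) (2 + \<alpha> - \<beta> - \<gamma> - \<delta>) (a + b + c + d - 1))
        / (qshift (q^2) (1 + \<alpha> - \<beta> - \<gamma>) (a + b + c)
          * qshift (q^2) (1 + \<alpha> - \<beta> - \<delta>) (a + b + d)
          * qshift (q^2) (1 + \<alpha> - \<gamma> - \<delta>) (a + c + d))))"
proof -
  define p where "p = q^2"
  have p: "0 < p" "p < 1"
    using assms(1) power_Suc_less_one[OF assms(1,2), of 1] by (auto simp: p_def numeral_2_eq_2)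
  note h4 = assms(4)[folded p_def]
  note h5 = assms(5)[folded p_def]
  define al1 where "al1 = \<alpha> + a"
  define be1 where "be1 = \<beta> - b"
  define ga1 where "ga1 = \<gamma> - c"
  define de1 where "de1 = \<delta> - d"
  define Q where "Q = (\<lambda>x. qpoch_inf (qpow p x) p)"
  define W where "W = (\<lambda>x. qpow (1 - p) x)"
  define P where "P = complex_of_real p"
  define AA where "AA = qpow p al1"
  define BB where "BB = qpow p be1"
  define CC where "CC = qpow p ga1"
  define DD where "DD = qpow p de1"
  have Qnz: "Q x \<noteq> 0" if "\<not> qgamma_pole p x" for x
    unfolding Q_def by (rule Q_nz[OF p that])
  have h4': "\<not> qgamma_pole p x" if "x \<in> {\<alpha> + a + of_nat 0, \<beta> + of_nat 0 - b, \<gamma> + of_nat 0 - c,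
            \<delta> + of_nat 0 - d, 1 + \<alpha> - \<beta> + a + b + of_nat 0,
            1 + \<alpha> - \<gamma> + a + c + of_nat 0, 1 + \<alpha> - \<delta> + a + d + of_nat 0}" for x
    using h4 that by blast
  have h5': "\<not> qgamma_pole p x" if "x \<in> {\<alpha>, \<beta>, \<gamma>, \<delta>, 1 + \<alpha> - \<beta>, 1 + \<alpha> - \<gamma>, 1 + \<alpha> - \<delta>,
            2 + \<alpha> - \<beta> - \<gamma> - \<delta>, 1 + \<alpha> - \<beta> - \<gamma>, 1 + \<alpha> - \<beta> - \<delta>,
            1 + \<alpha> - \<gamma> - \<delta>, \<beta> - b, \<gamma> - c, \<delta> - d,
            2 + \<alpha> - \<beta> - \<gamma> - \<delta> + (a + b + c + d - 1),
            1 + \<alpha> - \<beta> - \<gamma> + (a + b + c), 1 + \<alpha> - \<beta> - \<delta> + (a + b + d),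
            1 + \<alpha> - \<gamma> - \<delta> + (a + c + d)}" for x
    using h5 that by blast
  have np_al1: "\<not> qgamma_pole p al1" using h4'[of "\<alpha> + a + of_nat 0"] by (simp add: al1_def)
  have np_be1: "\<not> qgamma_pole p be1" using h4'[of "\<beta> + of_nat 0 - b"] by (simp add: be1_def)
  have np_ga1: "\<not> qgamma_pole p ga1" using h4'[of "\<gamma> + of_nat 0 - c"] by (simp add: ga1_def)
  have np_de1: "\<not> qgamma_pole p de1" using h4'[of "\<delta> + of_nat 0 - d"] by (simp add: de1_def)
  have ab: "1 + \<alpha> - \<beta> + a + b + of_nat 0 = 1 + al1 - be1" by (simp add: al1_def be1_def algebra_simps)
  have ac: "1 + \<alpha> - \<gamma> + a + c + of_nat 0 = 1 + al1 - ga1" by (simp add: al1_def ga1_def algebra_simps)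
  have ad: "1 + \<alpha> - \<delta> + a + d + of_nat 0 = 1 + al1 - de1" by (simp add: al1_def de1_def algebra_simps)
  have np_ab: "\<not> qgamma_pole p (1 + al1 - be1)" using h4'[of "1 + \<alpha> - \<beta> + a + b + of_nat 0"] unfolding ab by simp
  have np_ac: "\<not> qgamma_pole p (1 + al1 - ga1)" using h4'[of "1 + \<alpha> - \<gamma> + a + c + of_nat 0"] unfolding ac by simp
  have np_ad: "\<not> qgamma_pole p (1 + al1 - de1)" using h4'[of "1 + \<alpha> - \<delta> + a + d + of_nat 0"] unfolding ad by simp
  have abc: "1 + \<alpha> - \<beta> - \<gamma> + (a + b + c) = 1 + al1 - be1 - ga1" by (simp add: al1_def be1_def ga1_def algebra_simps)
  have abd: "1 + \<alpha> - \<beta> - \<delta> + (a + b + d) = 1 + al1 - be1 - de1" by (simp add: al1_def be1_def de1_def algebra_simps)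
  have acd: "1 + \<alpha> - \<gamma> - \<delta> + (a + c + d) = 1 + al1 - ga1 - de1" by (simp add: al1_def ga1_def de1_def algebra_simps)
  have abcd: "2 + \<alpha> - \<beta> - \<gamma> - \<delta> + (a + b + c + d - 1) = 1 + al1 - be1 - ga1 - de1"
    by (simp add: al1_def be1_def ga1_def de1_def algebra_simps)
  have np_abc: "\<not> qgamma_pole p (1 + al1 - be1 - ga1)" using h5'[of "1 + \<alpha> - \<beta> - \<gamma> + (a + b + c)"] unfolding abc by simp
  have np_abd: "\<not> qgamma_pole p (1 + al1 - be1 - de1)" using h5'[of "1 + \<alpha> - \<beta> - \<delta> + (a + b + d)"] unfolding abd by simp
  have np_acd: "\<not> qgamma_pole p (1 + al1 - ga1 - de1)" using h5'[of "1 + \<alpha> - \<gamma> - \<delta> + (a + c + d)"] unfolding acd by simp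
  have np_abcd: "\<not> qgamma_pole p (1 + al1 - be1 - ga1 - de1)" using h5'[of "2 + \<alpha> - \<beta> - \<gamma> - \<delta> + (a + b + c + d - 1)"] unfolding abcd by simp
  have eB: "AA * P / BB = qpow p (1 + al1 - be1)" unfolding AA_def BB_def P_def by (rule E1[OF p(1), symmetric])
  have eC: "AA * P / CC = qpow p (1 + al1 - ga1)" unfolding AA_def CC_def P_def by (rule E1[OF p(1), symmetric])
  have eD: "AA * P / DD = qpow p (1 + al1 - de1)" unfolding AA_def DD_def P_def by (rule E1[OF p(1), symmetric])
  have eBC: "AA * P / (BB * CC) = qpow p (1 + al1 - be1 - ga1)" unfolding AA_def BB_def CC_def P_def by (rule E2[OF p(1), symmetric])
  have eBD: "AA * P / (BB * DD) = qpow p (1 + al1 - be1 - de1)" unfolding AA_def BB_def DD_def P_def by (rule E2[OF p(1), symmetric])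
  have eCD: "AA * P / (CC * DD) = qpow p (1 + al1 - ga1 - de1)" unfolding AA_def CC_def DD_def P_def by (rule E2[OF p(1), symmetric])
  have eBCD: "AA * P / (BB * CC * DD) = qpow p (1 + al1 - be1 - ga1 - de1)" unfolding AA_def BB_def CC_def DD_def P_def by (rule E3[OF p(1), symmetric])
  have hB: "\<And>k. AA * complex_of_real p / BB * complex_of_real (p^k) \<noteq> 1"
    using pole_hyp[OF p(1) np_ab] eB unfolding P_def by simp
  have hC: "\<And>k. AA * complex_of_real p / CC * complex_of_real (p^k) \<noteq> 1"
    using pole_hyp[OF p(1) np_ac] eC unfolding P_def by simp
  have hD: "\<And>k. AA * complex_of_real p / DD * complex_of_real (p^k) \<noteq> 1"
    using pole_hyp[OF p(1) np_ad] eD unfolding P_def by simp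
  have nzB: "BB \<noteq> 0" "CC \<noteq> 0" "DD \<noteq> 0" unfolding BB_def CC_def DD_def by (auto simp: qpow_nz)
  have zlt: "norm (AA * complex_of_real p / (BB * CC * DD)) < 1"
  proof -
    have re: "Re (1 + al1 - be1 - ga1 - de1) > 0" using assms(3) by (simp add: al1_def be1_def ga1_def de1_def)
    have "ln p < 0" using p by simp
    hence "Re (1 + al1 - be1 - ga1 - de1) * ln p < 0" using re by (simp add: mult_pos_neg)
    thus ?thesis using eBCD unfolding P_def by (simp add: norm_qpow)
  qed
  have core_app: "tv p BB CC DD AA sums
    (qpoch_inf AA p * qpoch_inf (AA * complex_of_real p/(BB*CC)) p * qpoch_inf (AA * complex_of_real p/(BB*DD)) p
       * qpoch_inf (AA * complex_of_real p/(CC*DD)) p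
     / (qpoch_inf (AA * complex_of_real p/BB) p * qpoch_inf (AA * complex_of_real p/CC) p
       * qpoch_inf (AA * complex_of_real p/DD) p * qpoch_inf (AA * complex_of_real p/(BB*CC*DD)) p))"
    by (rule core[OF p hB hC hD nzB zlt])
  define G where "G = qpoch_inf P p"
  have Gnz: "G \<noteq> 0" unfolding G_def P_def by (rule Pc_nz[OF p])
  have Pnz: "1 - P \<noteq> 0" using p by (simp add: P_def)
  have Wnz: "W x \<noteq> 0" for x unfolding W_def by (rule qpow_nz)
  have Qh5: "Q x \<noteq> 0" if "x \<in> {\<alpha>, \<beta>, \<gamma>, \<delta>, 1 + \<alpha> - \<beta>, 1 + \<alpha> - \<gamma>, 1 + \<alpha> - \<delta>,
            2 + \<alpha> - \<beta> - \<gamma> - \<delta>, 1 + \<alpha> - \<beta> - \<gamma>, 1 + \<alpha> - \<beta> - \<delta>,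
            1 + \<alpha> - \<gamma> - \<delta>}" for x
    by (rule Qnz, rule h5') (use that in auto)
  have Qa: "Q \<alpha> \<noteq> 0" and Qb: "Q \<beta> \<noteq> 0" and Qc: "Q \<gamma> \<noteq> 0" and Qd: "Q \<delta> \<noteq> 0"
    and Q5: "Q (1 + \<alpha> - \<beta>) \<noteq> 0" and Q6: "Q (1 + \<alpha> - \<gamma>) \<noteq> 0" and Q7: "Q (1 + \<alpha> - \<delta>) \<noteq> 0"
    and Q8: "Q (2 + \<alpha> - \<beta> - \<gamma> - \<delta>) \<noteq> 0" and Q9: "Q (1 + \<alpha> - \<beta> - \<gamma>) \<noteq> 0"
    and Q10: "Q (1 + \<alpha> - \<beta> - \<delta>) \<noteq> 0" and Q11: "Q (1 + \<alpha> - \<gamma> - \<delta>) \<noteq> 0"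
    by (rule Qh5; simp)+
  have Qal1: "Q al1 \<noteq> 0" and Qbe1: "Q be1 \<noteq> 0" and Qga1: "Q ga1 \<noteq> 0" and Qde1: "Q de1 \<noteq> 0"
    and Qab: "Q (1 + al1 - be1) \<noteq> 0" and Qac: "Q (1 + al1 - ga1) \<noteq> 0" and Qad: "Q (1 + al1 - de1) \<noteq> 0"
    and Qabc: "Q (1 + al1 - be1 - ga1) \<noteq> 0" and Qabd: "Q (1 + al1 - be1 - de1) \<noteq> 0"
    and Qacd: "Q (1 + al1 - ga1 - de1) \<noteq> 0" and Qabcd: "Q (1 + al1 - be1 - ga1 - de1) \<noteq> 0"
    by (intro Qnz np_al1 np_be1 np_ga1 np_de1 np_ab np_ac np_ad np_abc np_abd np_acd np_abcd)+
  have sG: "qshift p x s = Q x / Q y * qp (qpow p y) p n * W (- s)"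
    if "Q x \<noteq> 0" "Q y \<noteq> 0" "x + s = y + of_nat n" for x y s n
    using qshift_G[OF p, of x y s n] that unfolding Q_def W_def by simp
  have sB: "qshift p x s = Q x / Q y * W (- s)"
    if "Q x \<noteq> 0" "Q y \<noteq> 0" "x + s = y" for x y s
    using qshift_B[OF p, of x y s] that unfolding Q_def W_def by simp
  define Cst where "Cst = Q \<alpha>*Q \<beta>*Q \<gamma>*Q \<delta>/(Q al1*Q be1*Q ga1*Q de1)
     * (Q (1 + al1 - be1)*Q (1 + al1 - ga1)*Q (1 + al1 - de1)/(Q (1 + \<alpha> - \<beta>)*Q (1 + \<alpha> - \<gamma>)*Q (1 + \<alpha> - \<delta>)))
     / (1 - P) * W (2*(a+b+c+d))"
  have tm: "(1 - qpow q (4 * of_nat n + 2 * a + 2 * \<alpha>))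
              * qshift p \<alpha> (a + of_nat n) * qshift p \<beta> (of_nat n - b)
              * qshift p \<gamma> (of_nat n - c) * qshift p \<delta> (of_nat n - d)
           / ((1 - complex_of_real p) * qfact p n
              * qshift p (1 + \<alpha> - \<beta>) (a + b + of_nat n)
              * qshift p (1 + \<alpha> - \<gamma>) (a + c + of_nat n)
              * qshift p (1 + \<alpha> - \<delta>) (a + d + of_nat n))
           * qpow q (A * of_nat n) = Cst * tv p BB CC DD AA n" for n
  proof -
    have t1: "qpow q (4 * of_nat n + 2 * a + 2 * \<alpha>) = AA * P ^ (2*n)"
    proof -
      have e: "4 * of_nat n + 2 * a + 2 * \<alpha> = 2 * (of_nat (2*n) + al1)" by (simp add: al1_def algebra_simps)
      have "qpow q (4 * of_nat n + 2 * a + 2 * \<alpha>) = qpow p (of_nat (2*n) + al1)"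
        unfolding e qpow_sq[OF assms(1)] p_def ..
      also have "\<dots> = P ^ (2*n) * AA" by (simp only: qpow_add qpow_nat[OF p(1)] AA_def P_def)
      finally show ?thesis by (simp add: mult_ac)
    qed
    have t2: "qshift p \<alpha> (a + of_nat n) = Q \<alpha> / Q al1 * qp AA p n * W (-(a + of_nat n))"
      unfolding AA_def by (rule sG) (use Qh5 Qal1 in \<open>auto simp: al1_def\<close>)
    have t3: "qshift p \<beta> (of_nat n - b) = Q \<beta> / Q be1 * qp BB p n * W (-(of_nat n - b))"
      unfolding BB_def by (rule sG) (use Qh5 Qbe1 in \<open>auto simp: be1_def\<close>)
    have t4: "qshift p \<gamma> (of_nat n - c) = Q \<gamma> / Q ga1 * qp CC p n * W (-(of_nat n - c))"
      unfolding CC_def by (rule sG) (use Qh5 Qga1 in \<open>auto simp: ga1_def\<close>)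
    have t5: "qshift p \<delta> (of_nat n - d) = Q \<delta> / Q de1 * qp DD p n * W (-(of_nat n - d))"
      unfolding DD_def by (rule sG) (use Qh5 Qde1 in \<open>auto simp: de1_def\<close>)
    have t6: "qshift p (1 + \<alpha> - \<beta>) (a + b + of_nat n) = Q (1 + \<alpha> - \<beta>) / Q (1 + al1 - be1) * qp (AA * P / BB) p n * W (-(a + b + of_nat n))"
      unfolding eB by (rule sG) (use Qh5 Qab in \<open>auto simp: al1_def be1_def algebra_simps\<close>)
    have t7: "qshift p (1 + \<alpha> - \<gamma>) (a + c + of_nat n) = Q (1 + \<alpha> - \<gamma>) / Q (1 + al1 - ga1) * qp (AA * P / CC) p n * W (-(a + c + of_nat n))"
      unfolding eC by (rule sG) (use Qh5 Qac in \<open>auto simp: al1_def ga1_def algebra_simps\<close>)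
    have t8: "qshift p (1 + \<alpha> - \<delta>) (a + d + of_nat n) = Q (1 + \<alpha> - \<delta>) / Q (1 + al1 - de1) * qp (AA * P / DD) p n * W (-(a + d + of_nat n))"
      unfolding eD by (rule sG) (use Qh5 Qad in \<open>auto simp: al1_def de1_def algebra_simps\<close>)
    have t9: "qfact p n = qp P p n / (1 - P) ^ n"
      unfolding P_def by (rule qfact_eq[OF p])
    have t10: "qpow q (A * of_nat n) = (AA * P / (BB * CC * DD)) ^ n"
    proof -
      have e: "A * of_nat n = 2 * ((1 + al1 - be1 - ga1 - de1) * of_nat n)"
        by (simp add: A_def al1_def be1_def ga1_def de1_def algebra_simps)
      have "qpow q (A * of_nat n) = qpow p ((1 + al1 - be1 - ga1 - de1) * of_nat n)"
        unfolding e qpow_sq[OF assms(1)] p_def ..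
      thus ?thesis by (simp add: qpow_mult_nat eBCD)
    qed
    have p1: "0 < 1 - p" using p by simp
    have Un: "(1 - P) ^ n = W (of_nat n)"
      unfolding W_def qpow_nat[OF p1] by (simp add: P_def)
    have Wc: "W (-(a + of_nat n)) * W (-(of_nat n - b)) * W (-(of_nat n - c)) * W (-(of_nat n - d)) * (1 - P) ^ n
        / (W (-(a + b + of_nat n)) * W (-(a + c + of_nat n)) * W (-(a + d + of_nat n))) = W (2*(a+b+c+d))"
      unfolding Un W_def qpow_add[symmetric] qpow_diff[symmetric]
      by (rule arg_cong[where f="qpow (1-p)"]) (simp add: algebra_simps)
    have qnz: "qp P p n \<noteq> 0" "qp (AA * P / BB) p n \<noteq> 0" "qp (AA * P / CC) p n \<noteq> 0" "qp (AA * P / DD) p n \<noteq> 0"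
      using qp_nz[OF pc_hyp[OF p]] qp_nz[OF hB] qp_nz[OF hC] qp_nz[OF hD] unfolding P_def by auto
    have "(1 - qpow q (4 * of_nat n + 2 * a + 2 * \<alpha>))
              * qshift p \<alpha> (a + of_nat n) * qshift p \<beta> (of_nat n - b)
              * qshift p \<gamma> (of_nat n - c) * qshift p \<delta> (of_nat n - d)
           / ((1 - complex_of_real p) * qfact p n
              * qshift p (1 + \<alpha> - \<beta>) (a + b + of_nat n)
              * qshift p (1 + \<alpha> - \<gamma>) (a + c + of_nat n)
              * qshift p (1 + \<alpha> - \<delta>) (a + d + of_nat n))
           * qpow q (A * of_nat n)
       = (1 - AA * P ^ (2*n)) * (Q \<alpha> / Q al1 * qp AA p n * W (-(a + of_nat n)))
           * (Q \<beta> / Q be1 * qp BB p n * W (-(of_nat n - b)))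
           * (Q \<gamma> / Q ga1 * qp CC p n * W (-(of_nat n - c)))
           * (Q \<delta> / Q de1 * qp DD p n * W (-(of_nat n - d)))
         / ((1 - P) * (qp P p n / (1 - P) ^ n)
           * (Q (1 + \<alpha> - \<beta>) / Q (1 + al1 - be1) * qp (AA * P / BB) p n * W (-(a + b + of_nat n)))
           * (Q (1 + \<alpha> - \<gamma>) / Q (1 + al1 - ga1) * qp (AA * P / CC) p n * W (-(a + c + of_nat n)))
           * (Q (1 + \<alpha> - \<delta>) / Q (1 + al1 - de1) * qp (AA * P / DD) p n * W (-(a + d + of_nat n))))
         * (AA * P / (BB * CC * DD)) ^ n"
      unfolding t1 t2 t3 t4 t5 t6 t7 t8 t9 t10 P_def ..
    also have "\<dots> = Cst * tv p BB CC DD AA n"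
      unfolding alg_term[OF Qal1 Qbe1 Qga1 Qde1 Qab Qac Qad Q5 Q6 Q7 qnz Wnz Wnz Wnz Pnz power_not_zero[OF Pnz]]
      unfolding Wc unfolding Cst_def tv_def sv_def P_def by simp
    finally show ?thesis .
  qed
  have nd: "(qpoch_inf AA p * qpoch_inf (AA * complex_of_real p/(BB*CC)) p * qpoch_inf (AA * complex_of_real p/(BB*DD)) p
       * qpoch_inf (AA * complex_of_real p/(CC*DD)) p
     / (qpoch_inf (AA * complex_of_real p/BB) p * qpoch_inf (AA * complex_of_real p/CC) p
       * qpoch_inf (AA * complex_of_real p/DD) p * qpoch_inf (AA * complex_of_real p/(BB*CC*DD)) p)) = Q al1 * Q (1 + al1 - be1 - ga1) * Q (1 + al1 - be1 - de1) * Q (1 + al1 - ga1 - de1)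
      / (Q (1 + al1 - be1) * Q (1 + al1 - ga1) * Q (1 + al1 - de1) * Q (1 + al1 - be1 - ga1 - de1))"
    unfolding P_def[symmetric] unfolding eB eC eD eBC eBD eCD eBCD unfolding Q_def AA_def ..
  have gam: "qgamma p x = G / Q x * W (1 - x)" for x
    unfolding qgamma_def G_def Q_def W_def P_def ..
  have s1: "qshift p \<beta> (- b) = Q \<beta> / Q be1 * W (- (- b))" by (rule sB[OF Qb Qbe1]) (simp add: be1_def)
  have s2: "qshift p \<gamma> (- c) = Q \<gamma> / Q ga1 * W (- (- c))" by (rule sB[OF Qc Qga1]) (simp add: ga1_def)
  have s3: "qshift p \<delta> (- d) = Q \<delta> / Q de1 * W (- (- d))" by (rule sB[OF Qd Qde1]) (simp add: de1_def)
  have s4: "qshift p (2 + \<alpha> - \<beta> - \<gamma> - \<delta>) (a + b + c + d - 1)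
      = Q (2 + \<alpha> - \<beta> - \<gamma> - \<delta>) / Q (1 + al1 - be1 - ga1 - de1) * W (- (a + b + c + d - 1))"
    by (rule sB[OF Q8 Qabcd abcd])
  have s5: "qshift p (1 + \<alpha> - \<beta> - \<gamma>) (a + b + c) = Q (1 + \<alpha> - \<beta> - \<gamma>) / Q (1 + al1 - be1 - ga1) * W (- (a + b + c))"
    by (rule sB[OF Q9 Qabc abc])
  have s6: "qshift p (1 + \<alpha> - \<beta> - \<delta>) (a + b + d) = Q (1 + \<alpha> - \<beta> - \<delta>) / Q (1 + al1 - be1 - de1) * W (- (a + b + d))"
    by (rule sB[OF Q10 Qabd abd])
  have s7: "qshift p (1 + \<alpha> - \<gamma> - \<delta>) (a + c + d) = Q (1 + \<alpha> - \<gamma> - \<delta>) / Q (1 + al1 - ga1 - de1) * W (- (a + c + d))"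
    by (rule sB[OF Q11 Qacd acd])
  have p1: "0 < 1 - p" using p by simp
  have W1: "1 - P = W 1" unfolding W_def qpow_1[OF p1] by (simp add: P_def)
  have Wfin: "W (2*(a+b+c+d)) / (1 - P)
     = W (1 - (1 + \<alpha> - \<beta>)) * W (1 - (1 + \<alpha> - \<gamma>)) * W (1 - (1 + \<alpha> - \<delta>)) * W (1 - (2 + \<alpha> - \<beta> - \<gamma> - \<delta>))
       / (W (1 - \<alpha>) * W (1 - (1 + \<alpha> - \<beta> - \<gamma>)) * W (1 - (1 + \<alpha> - \<beta> - \<delta>)) * W (1 - (1 + \<alpha> - \<gamma> - \<delta>)))
       * (W (- (- b)) * W (- (- c)) * W (- (- d)) * W (- (a + b + c + d - 1))
         / (W (- (a + b + c)) * W (- (a + b + d)) * W (- (a + c + d))))"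
    unfolding W1 unfolding W_def qpow_add[symmetric] qpow_diff[symmetric]
    by (rule arg_cong[where f="qpow (1-p)"]) (simp add: algebra_simps)
  have val: "Cst * (qpoch_inf AA p * qpoch_inf (AA * complex_of_real p/(BB*CC)) p * qpoch_inf (AA * complex_of_real p/(BB*DD)) p
       * qpoch_inf (AA * complex_of_real p/(CC*DD)) p
     / (qpoch_inf (AA * complex_of_real p/BB) p * qpoch_inf (AA * complex_of_real p/CC) p
       * qpoch_inf (AA * complex_of_real p/DD) p * qpoch_inf (AA * complex_of_real p/(BB*CC*DD)) p)) = ((qgamma p (1 + \<alpha> - \<beta>) * qgamma p (1 + \<alpha> - \<gamma>)
        * qgamma p (1 + \<alpha> - \<delta>) * qgamma p (2 + \<alpha> - \<beta> - \<gamma> - \<delta>))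
      / (qgamma p \<alpha> * qgamma p (1 + \<alpha> - \<beta> - \<gamma>)
        * qgamma p (1 + \<alpha> - \<beta> - \<delta>) * qgamma p (1 + \<alpha> - \<gamma> - \<delta>))
      * ((qshift p \<beta> (- b) * qshift p \<gamma> (- c) * qshift p \<delta> (- d)
          * qshift p (2 + \<alpha> - \<beta> - \<gamma> - \<delta>) (a + b + c + d - 1))
        / (qshift p (1 + \<alpha> - \<beta> - \<gamma>) (a + b + c)
          * qshift p (1 + \<alpha> - \<beta> - \<delta>) (a + b + d)
          * qshift p (1 + \<alpha> - \<gamma> - \<delta>) (a + c + d))))"
    unfolding nd gam s1 s2 s3 s4 s5 s6 s7
    unfolding alg_rhs[OF Gnz Q5 Q6 Q7 Q8 Qa Q9 Q10 Q11 Qb Qc Qd Qbe1 Qga1 Qde1 Qabcd Qabc Qabd Qacd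
        Wnz Wnz Wnz Wnz Wnz Wnz Wnz Wnz Wnz Wnz Wnz Wnz Wnz Wnz Wnz]
    unfolding Cst_def
    unfolding alg_final[OF Qal1 Qbe1 Qga1 Qde1 Qab Qac Qad Q5 Q6 Q7 Qabcd Pnz]
    unfolding Wfin ..
  have S: "(\<lambda>n. Cst * tv p BB CC DD AA n) sums (Cst * (qpoch_inf AA p * qpoch_inf (AA * complex_of_real p/(BB*CC)) p * qpoch_inf (AA * complex_of_real p/(BB*DD)) p
       * qpoch_inf (AA * complex_of_real p/(CC*DD)) p
     / (qpoch_inf (AA * complex_of_real p/BB) p * qpoch_inf (AA * complex_of_real p/CC) p
       * qpoch_inf (AA * complex_of_real p/DD) p * qpoch_inf (AA * complex_of_real p/(BB*CC*DD)) p)))"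
    by (rule sums_mult[OF core_app])
  show ?thesis
    unfolding p_def[symmetric] val[symmetric] using S tm by simp
qed

end
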